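(* Let ${\mathcal M}:{\mathbb E}\to{\mathbb F}$ be a linear map between finite-dimensional Euclidean spaces, $\mathcal{K}\subseteq{\mathbb E}$ a convex cone, $b\in{\mathbb F}$, and ${\mathcal F}=\{X\in\mathcal{K}:{\mathcal M}(X)=b\}$ (assumed nonempty). Let $v_1,\dots,v_r\in b^{\perp}$ satisfy $v_1\in{\mathcal M}(\mathcal{K})^*$ and $v_i\in\big({\mathcal M}(\mathcal{K})\cap v_1^{\perp}\cap\cdots\cap v_{i-1}^{\perp}\big)^*$ for $i=2,\dots,r$. Put $N={\mathcal M}(\mathcal{K})\cap v_1^\perp\cap\cdots\cap v_r^\perp$ and $E=\mathcal{K}\cap({\mathcal M}^*v_1)^\perp\cap\cdots\cap({\mathcal M}^*v_r)^\perp$. Then: (1) for each $i$, $v_i$ exposes a face of ${\mathcal M}(\mathcal{K})\cap v_1^\perp\cap\cdots\cap v_{i-1}^\perp$ containing $b$, and ${\mathcal M}^*v_i$ exposes a face of $\mathcal{K}\cap({\mathcal M}^*v_1)^\perp\cap\cdots\cap({\mathcal M}^*v_{i-1})^\perp$ containing ${\mathcal F}$; (2) $N$ is a face of ${\mathcal M}(\mathcal{K})$ containing $b$, and $E$ is a face of $\mathcal{K}$ containing ${\mathcal F}$; (3) $N=\operatorname{face}(b,{\mathcal M}(\mathcal{K}))$ if and only if $E=\operatorname{face}({\mathcal F},\mathcal{K})$.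
   Context: $\operatorname{face}(S,C)$ denotes the smallest face of the cone $C$ containing the set $S$ (intersection of all faces containing $S$). $S^*$ is the dual cone, $v^\perp$ the orthogonal complement of $\{v\}$. A vector $w$ in the dual of a cone $C$ exposes the face $C\cap w^\perp$. *)

theory Defs
  imports "HOL-Analysis.Analysis"
begin

definition dual_cone :: "'a::real_inner set \<Rightarrow> 'a set" where
  "dual_cone S = {y. \<forall>x\<in>S. inner x y \<ge> 0}"

definition orth :: "'a::real_inner \<Rightarrow> 'a set" where
  "orth v = {x. inner x v = 0}"

definition face_hull :: "'a::real_vector set \<Rightarrow> 'a set \<Rightarrow> 'a set" where
  "face_hull S C = \<Inter>{T. T face_of C \<and> S \<subseteq> T}"

definition exposes :: "'a::real_inner \<Rightarrow> 'a set \<Rightarrow> 'a set \<Rightarrow> bool" where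
  "exposes w C T \<longleftrightarrow> w \<in> dual_cone C \<and> T = C \<inter> orth w"

end

theory Submission
  imports Defs
begin

lemma face_scale:
  assumes C: "convex_cone C" and T: "T face_of C" and x: "x \<in> T" and c: "c \<ge> 0"
  shows "c *\<^sub>R x \<in> T"
proof (cases "x = 0")
  case True then show ?thesis using x by simp
next
  case False
  have TC: "T \<subseteq> C" using T face_of_imp_subset by blast
  have xC: "x \<in> C" using TC x by blast
  have 0: "0 \<in> C" using C convex_cone_iff by blast
  have "x \<in> open_segment 0 (2 *\<^sub>R x)"
    using False by (auto simp: in_segment intro!: exI[of _ "1/2"])
  moreover have "2 *\<^sub>R x \<in> C" using C xC by (intro convex_cone_scaleR) auto
  ultimately have zT: "0 \<in> T" using T 0 x unfolding face_of_def by blast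
  show ?thesis
  proof (cases "c \<le> 1")
    case True
    have "c *\<^sub>R x \<in> closed_segment 0 x" using True c by (auto simp: in_segment intro!: exI[of _ c])
    then show ?thesis using convex_contains_segment face_of_imp_convex[OF T] zT x by blast
  next
    case False
    have "x \<in> open_segment 0 (c *\<^sub>R x)"
      using False \<open>x \<noteq> 0\<close> by (auto simp: in_segment intro!: exI[of _ "1/c"])
    moreover have "c *\<^sub>R x \<in> C" using C xC c convex_cone_scaleR by auto
    ultimately show ?thesis using T 0 x unfolding face_of_def by blast
  qed
qed

lemma face_sum:
  assumes C: "convex_cone C" and T: "T face_of C" and a: "a \<in> C" and c: "c \<in> C" and s: "a + c \<in> T"
  shows "a \<in> T"
proof -
  have h: "(1/2) *\<^sub>R (a + c) \<in> T" using face_scale[OF C T s] by simp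
  show ?thesis
  proof (cases "a = c")
    case True then show ?thesis using h by (simp add: scaleR_2[symmetric])
  next
    case False
    have "(1/2) *\<^sub>R (a + c) \<in> open_segment a c"
      using False by (auto simp: in_segment scaleR_add_right intro!: exI[of _ "1/2"])
    then show ?thesis using T a c h unfolding face_of_def by blast
  qed
qed

definition gen :: "'a::real_vector set \<Rightarrow> 'a \<Rightarrow> 'a set" where
  "gen C p = {z\<in>C. \<exists>e>0. p - e *\<^sub>R z \<in> C}"

lemma gen_step:
  assumes C: "convex_cone C" and a: "a \<in> C" and c: "c \<in> C" and t: "0 < t" "t < 1"
    and e: "e > 0" and pz: "p - e *\<^sub>R ((1 - t) *\<^sub>R a + t *\<^sub>R c) \<in> C"
  shows "a \<in> gen C p"
proof -
  have "p - (e * (1 - t)) *\<^sub>R a = (p - e *\<^sub>R ((1 - t) *\<^sub>R a + t *\<^sub>R c)) + (e * t) *\<^sub>R c"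
    by (simp add: algebra_simps)
  also have "\<dots> \<in> C" using C pz c e t by (intro convex_cone_add convex_cone_scaleR) auto
  finally show ?thesis using a e t unfolding gen_def by (auto intro!: exI[of _ "e * (1 - t)"])
qed

lemma gen_shrink:
  assumes C: "convex_cone C" and p: "p \<in> C" and h: "p - e1 *\<^sub>R z \<in> C" and e: "0 < e" "e \<le> e1"
  shows "p - e *\<^sub>R z \<in> C"
proof -
  have "p - e *\<^sub>R z = (e / e1) *\<^sub>R (p - e1 *\<^sub>R z) + (1 - e / e1) *\<^sub>R p"
    using e by (simp add: algebra_simps)
  also have "\<dots> \<in> C"
    using C h p e by (intro convex_cone_add convex_cone_scaleR) auto
  finally show ?thesis .
qed

lemma gen_face:
  assumes C: "convex_cone C" and p: "p \<in> C"
  shows "gen C p face_of C"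
  unfolding face_of_def
proof (intro conjI ballI impI)
  show "gen C p \<subseteq> C" unfolding gen_def by auto
  show "convex (gen C p)"
    unfolding convex_alt
  proof (intro ballI allI impI)
    fix x y and u :: real
    assume x: "x \<in> gen C p" and y: "y \<in> gen C p" and u: "0 \<le> u \<and> u \<le> 1"
    obtain e1 where e1: "e1 > 0" "p - e1 *\<^sub>R x \<in> C" "x \<in> C" using x unfolding gen_def by auto
    obtain e2 where e2: "e2 > 0" "p - e2 *\<^sub>R y \<in> C" "y \<in> C" using y unfolding gen_def by auto
    define e where "e = min e1 e2"
    have ex: "p - e *\<^sub>R x \<in> C" using gen_shrink[OF C p e1(2)] e1 e2 unfolding e_def by auto
    have ey: "p - e *\<^sub>R y \<in> C" using gen_shrink[OF C p e2(2)] e1 e2 unfolding e_def by auto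
    have "p - e *\<^sub>R ((1 - u) *\<^sub>R x + u *\<^sub>R y) = (1 - u) *\<^sub>R (p - e *\<^sub>R x) + u *\<^sub>R (p - e *\<^sub>R y)"
      by (simp add: algebra_simps)
    also have "\<dots> \<in> C" using C ex ey u by (intro convex_cone_add convex_cone_scaleR) auto
    finally have "p - e *\<^sub>R ((1 - u) *\<^sub>R x + u *\<^sub>R y) \<in> C" .
    moreover have "(1 - u) *\<^sub>R x + u *\<^sub>R y \<in> C"
      using C e1 e2 u by (intro convex_cone_add convex_cone_scaleR) auto
    moreover have "e > 0" using e1 e2 unfolding e_def by auto
    ultimately show "(1 - u) *\<^sub>R x + u *\<^sub>R y \<in> gen C p" unfolding gen_def by auto
  qed
  fix a c x
  assume a: "a \<in> C" and c: "c \<in> C" and x: "x \<in> gen C p" and xs: "x \<in> open_segment a c"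
  obtain t where t: "0 < t" "t < 1" "x = (1 - t) *\<^sub>R a + t *\<^sub>R c" using xs by (auto simp: in_segment)
  obtain e where e: "e > 0" "p - e *\<^sub>R x \<in> C" using x unfolding gen_def by auto
  show "a \<in> gen C p" using gen_step[OF C a c t(1,2) e(1)] e t by simp
  have "x = (1 - (1 - t)) *\<^sub>R c + (1 - t) *\<^sub>R a" using t by (simp add: algebra_simps)
  then have "p - e *\<^sub>R ((1 - (1 - t)) *\<^sub>R c + (1 - t) *\<^sub>R a) \<in> C" using e by simp
  then show "c \<in> gen C p" using gen_step[OF C c a _ _ e(1), of "1 - t"] t by simp
qed

lemma face_hull_eq:
  assumes "G face_of C" "S \<subseteq> G" "\<And>T. T face_of C \<Longrightarrow> S \<subseteq> T \<Longrightarrow> G \<subseteq> T"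
  shows "face_hull S C = G"
  unfolding face_hull_def using assms by blast

lemma face_hull_gen:
  assumes C: "convex_cone C" and p: "p \<in> C"
  shows "face_hull {p} C = gen C p"
proof (rule face_hull_eq)
  show "gen C p face_of C" by (rule gen_face[OF C p])
  have "(1/2) *\<^sub>R p \<in> C" using C p by (intro convex_cone_scaleR) auto
  moreover have "p - (1/2) *\<^sub>R p = (1/2) *\<^sub>R p" proof -
    have "p - (1/2) *\<^sub>R p = (1 - 1/2) *\<^sub>R p" by (metis scaleR_left_diff_distrib scaleR_one)
    then show ?thesis by simp
  qed
  ultimately have "p - (1/2) *\<^sub>R p \<in> C" by simp
  then show "{p} \<subseteq> gen C p" using p unfolding gen_def by (auto intro!: exI[of _ "1/2"])
  fix T assume T: "T face_of C" "{p} \<subseteq> T"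
  show "gen C p \<subseteq> T"
  proof
    fix z assume z: "z \<in> gen C p"
    obtain e where e: "e > 0" "p - e *\<^sub>R z \<in> C" "z \<in> C" using z unfolding gen_def by auto
    have "e *\<^sub>R z + (p - e *\<^sub>R z) \<in> T" using T by simp
    moreover have "e *\<^sub>R z \<in> C" using C e by (intro convex_cone_scaleR) auto
    ultimately have "e *\<^sub>R z \<in> T" using face_sum[OF C T(1)] e by blast
    then have "(1/e) *\<^sub>R (e *\<^sub>R z) \<in> T" by (rule face_scale[OF C T(1)]) (use e \<open>e *\<^sub>R z \<in> T\<close> in auto)
    then show "z \<in> T" using e by simp
  qed
qed

lemma gen_self:
  assumes C: "convex_cone C" and p: "p \<in> C"
  shows "p \<in> gen C p"
  using face_hull_gen[OF C p] gen_face[OF C p] unfolding face_hull_def by blast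

lemma convex_orth: "convex (orth (v::'a::real_inner))"
proof -
  have "orth v = {x. v \<bullet> x = 0}" unfolding orth_def by (auto simp: inner_commute)
  then show ?thesis using convex_hyperplane by metis
qed

lemma convex_orths: "convex S \<Longrightarrow> convex (S \<inter> (\<Inter>j\<in>I. orth (w j :: 'a::real_inner)))"
  by (intro convex_Int convex_INT convex_orth) auto

lemma dual_face:
  assumes "convex C" "w \<in> dual_cone C"
  shows "(C \<inter> orth w) face_of C"
proof -
  have "(C \<inter> {x. w \<bullet> x = 0}) face_of C"
    using assms by (intro face_of_Int_supporting_hyperplane_ge) (auto simp: dual_cone_def inner_commute)
  moreover have "C \<inter> {x. w \<bullet> x = 0} = C \<inter> orth w" unfolding orth_def by (auto simp: inner_commute)
  ultimately show ?thesis by simp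
qed

lemma chain_face:
  assumes S: "convex S" and w: "\<forall>i\<in>{1..(r::nat)}. w i \<in> dual_cone (S \<inter> (\<Inter>j\<in>{1..<i}. orth (w j)))"
  shows "(S \<inter> (\<Inter>j\<in>{1..r}. orth (w j :: 'a::real_inner))) face_of S"
proof -
  have "(k::nat) \<le> r \<Longrightarrow> (S \<inter> (\<Inter>j\<in>{1..<Suc k}. orth (w j))) face_of S" for k
  proof (induction k)
    case 0 then show ?case using S by (simp add: face_of_refl)
  next
    case (Suc k)
    have IH: "(S \<inter> (\<Inter>j\<in>{1..<Suc k}. orth (w j))) face_of S" using Suc by simp
    have "w (Suc k) \<in> dual_cone (S \<inter> (\<Inter>j\<in>{1..<Suc k}. orth (w j)))" using w Suc.prems by auto
    then have "(S \<inter> (\<Inter>j\<in>{1..<Suc k}. orth (w j)) \<inter> orth (w (Suc k))) face_of (S \<inter> (\<Inter>j\<in>{1..<Suc k}. orth (w j)))"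
      by (intro dual_face convex_orths S)
    moreover have "S \<inter> (\<Inter>j\<in>{1..<Suc k}. orth (w j)) \<inter> orth (w (Suc k)) = S \<inter> (\<Inter>j\<in>{1..<Suc (Suc k)}. orth (w j))"
    proof -
      have "{1..<Suc (Suc k)} = insert (Suc k) {1..<Suc k}" by auto
      then show ?thesis by auto
    qed
    ultimately show ?case using IH face_of_trans by metis
  qed
  moreover have "{1..<Suc r} = {1..r}" by auto
  ultimately show ?thesis by (metis order_refl)
qed

lemma hull_pre:
  fixes M :: "'a::euclidean_space \<Rightarrow> 'b::euclidean_space"
  assumes linM: "linear M" and K: "convex_cone K" and Fne: "{X\<in>K. M X = b} \<noteq> {}"
  shows "face_hull {X\<in>K. M X = b} K = {x\<in>K. M x \<in> gen (M ` K) b}"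
proof -
  have MK: "convex_cone (M ` K)" using K linM convex_cone_linear_image by blast
  have bK: "b \<in> M ` K" using Fne by auto
  have Kc: "convex K" using K unfolding convex_cone_def by blast
  have Gc: "convex (gen (M ` K) b)" using gen_face[OF MK bK] face_of_imp_convex by blast
  show ?thesis
  proof (rule face_hull_eq)
    show "{x\<in>K. M x \<in> gen (M ` K) b} face_of K"
      unfolding face_of_def
    proof (intro conjI ballI impI)
      show "{x\<in>K. M x \<in> gen (M ` K) b} \<subseteq> K" by auto
      show "convex {x\<in>K. M x \<in> gen (M ` K) b}"
        unfolding convex_alt
      proof (intro ballI allI impI)
        fix x y and u :: real
        assume x: "x \<in> {x\<in>K. M x \<in> gen (M ` K) b}" and y: "y \<in> {x\<in>K. M x \<in> gen (M ` K) b}"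
          and u: "0 \<le> u \<and> u \<le> 1"
        have "(1 - u) *\<^sub>R x + u *\<^sub>R y \<in> K" using Kc x y u unfolding convex_alt by auto
        moreover have "M ((1 - u) *\<^sub>R x + u *\<^sub>R y) = (1 - u) *\<^sub>R M x + u *\<^sub>R M y"
          using linM by (simp add: linear_add linear_scale)
        moreover have "(1 - u) *\<^sub>R M x + u *\<^sub>R M y \<in> gen (M ` K) b"
          using Gc x y u unfolding convex_alt by auto
        ultimately show "(1 - u) *\<^sub>R x + u *\<^sub>R y \<in> {x\<in>K. M x \<in> gen (M ` K) b}" by simp
      qed
      fix a c x
      assume a: "a \<in> K" and c: "c \<in> K" and x: "x \<in> {x\<in>K. M x \<in> gen (M ` K) b}"
        and xs: "x \<in> open_segment a c"
      obtain t where t: "0 < t" "t < 1" "x = (1 - t) *\<^sub>R a + t *\<^sub>R c" using xs by (auto simp: in_segment)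
      have Mx: "M x = (1 - t) *\<^sub>R M a + t *\<^sub>R M c"
        using linM t(3) by (simp add: linear_add linear_scale)
      obtain e where e: "e > 0" "b - e *\<^sub>R M x \<in> M ` K" using x unfolding gen_def by auto
      have "M a \<in> gen (M ` K) b" using gen_step[OF MK _ _ t(1,2) e(1)] e Mx a c by auto
      then show "a \<in> {x\<in>K. M x \<in> gen (M ` K) b}" using a by simp
      have "M x = (1 - (1 - t)) *\<^sub>R M c + (1 - t) *\<^sub>R M a" using Mx by (simp add: algebra_simps)
      then have "M c \<in> gen (M ` K) b" using gen_step[OF MK _ _ _ _ e(1), of "M c" "M a" "1 - t"] e t a c by auto
      then show "c \<in> {x\<in>K. M x \<in> gen (M ` K) b}" using c by simp
    qed
    show "{X\<in>K. M X = b} \<subseteq> {x\<in>K. M x \<in> gen (M ` K) b}" using gen_self[OF MK bK] by auto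
    fix T assume T: "T face_of K" "{X\<in>K. M X = b} \<subseteq> T"
    show "{x\<in>K. M x \<in> gen (M ` K) b} \<subseteq> T"
    proof
      fix x assume x: "x \<in> {x\<in>K. M x \<in> gen (M ` K) b}"
      obtain e where e: "e > 0" "b - e *\<^sub>R M x \<in> M ` K" using x unfolding gen_def by auto
      then obtain y where y: "y \<in> K" "M y = b - e *\<^sub>R M x" by auto
      have exK: "e *\<^sub>R x \<in> K" using K x e by (intro convex_cone_scaleR) auto
      have "M (e *\<^sub>R x + y) = b" using linM y by (simp add: linear_add linear_scale)
      moreover have "e *\<^sub>R x + y \<in> K" using K exK y by (intro convex_cone_add) auto
      ultimately have "e *\<^sub>R x + y \<in> T" using T by auto
      then have "e *\<^sub>R x \<in> T" using face_sum[OF K T(1) exK y(1)] by blast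
      then have "(1/e) *\<^sub>R (e *\<^sub>R x) \<in> T" by (rule face_scale[OF K T(1)]) (use e in auto)
      then show "x \<in> T" using e by simp
    qed
  qed
qed
theorem mainTheorem5:
  fixes M :: "'a::euclidean_space \<Rightarrow> 'b::euclidean_space"
    and K :: "'a set" and b :: 'b and v :: "nat \<Rightarrow> 'b" and r :: nat
  assumes linM: "linear M"
    and coneK: "convex_cone K"
    and Fne: "{X\<in>K. M X = b} \<noteq> {}"
    and vb: "\<forall>i\<in>{1..r}. v i \<in> orth b"
    and vdual: "\<forall>i\<in>{1..r}. v i \<in> dual_cone (M ` K \<inter> (\<Inter>j\<in>{1..<i}. orth (v j)))"
  shows
    "(\<forall>i\<in>{1..r}.
        (let C = M ` K \<inter> (\<Inter>j\<in>{1..<i}. orth (v j)) in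
           exposes (v i) C (C \<inter> orth (v i)) \<and> (C \<inter> orth (v i)) face_of C \<and> b \<in> C \<inter> orth (v i))
      \<and> (let D = K \<inter> (\<Inter>j\<in>{1..<i}. orth (adjoint M (v j))) in
           exposes (adjoint M (v i)) D (D \<inter> orth (adjoint M (v i)))
           \<and> (D \<inter> orth (adjoint M (v i))) face_of D
           \<and> {X\<in>K. M X = b} \<subseteq> D \<inter> orth (adjoint M (v i))))
     \<and> ((M ` K \<inter> (\<Inter>j\<in>{1..r}. orth (v j))) face_of (M ` K)
        \<and> b \<in> M ` K \<inter> (\<Inter>j\<in>{1..r}. orth (v j)))
     \<and> ((K \<inter> (\<Inter>j\<in>{1..r}. orth (adjoint M (v j)))) face_of K
        \<and> {X\<in>K. M X = b} \<subseteq> K \<inter> (\<Inter>j\<in>{1..r}. orth (adjoint M (v j))))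
     \<and> (M ` K \<inter> (\<Inter>j\<in>{1..r}. orth (v j)) = face_hull {b} (M ` K)
        \<longleftrightarrow> K \<inter> (\<Inter>j\<in>{1..r}. orth (adjoint M (v j))) = face_hull {X\<in>K. M X = b} K)"
proof -
  have MK: "convex_cone (M ` K)" using coneK linM convex_cone_linear_image by blast
  have MKc: "convex (M ` K)" using MK unfolding convex_cone_def by blast
  have Kc: "convex K" using coneK unfolding convex_cone_def by blast
  have bK: "b \<in> M ` K" using Fne by auto
  have adj: "\<And>x w. x \<bullet> adjoint M w = M x \<bullet> w" using adjoint_works[OF linM] by blast
  have Deq: "\<And>I. K \<inter> (\<Inter>j\<in>I. orth (adjoint M (v j))) = {x\<in>K. M x \<in> M ` K \<inter> (\<Inter>j\<in>I. orth (v j))}"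
    by (auto simp: orth_def adj)
  have Fsub: "\<And>I. I \<subseteq> {1..r} \<Longrightarrow> {X\<in>K. M X = b} \<subseteq> K \<inter> (\<Inter>j\<in>I. orth (adjoint M (v j)))"
    using vb by (force simp: orth_def adj inner_commute)
  have vb': "\<forall>i\<in>{1..r}. b \<bullet> v i = 0" using vb unfolding orth_def by (auto simp: inner_commute)
  have bsub: "\<And>I. I \<subseteq> {1..r} \<Longrightarrow> b \<in> M ` K \<inter> (\<Inter>j\<in>I. orth (v j))"
    using vb' bK unfolding orth_def by auto
  have adual: "\<forall>i\<in>{1..r}. adjoint M (v i) \<in> dual_cone (K \<inter> (\<Inter>j\<in>{1..<i}. orth (adjoint M (v j))))"
  proof
    fix i assume i: "i \<in> {1..r}"
    show "adjoint M (v i) \<in> dual_cone (K \<inter> (\<Inter>j\<in>{1..<i}. orth (adjoint M (v j))))"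
      unfolding Deq dual_cone_def
    proof (intro CollectI ballI)
      fix x assume "x \<in> {x\<in>K. M x \<in> M ` K \<inter> (\<Inter>j\<in>{1..<i}. orth (v j))}"
      then show "0 \<le> x \<bullet> adjoint M (v i)" using vdual i unfolding adj dual_cone_def by auto
    qed
  qed
  have P1: "\<forall>i\<in>{1..r}.
        (let C = M ` K \<inter> (\<Inter>j\<in>{1..<i}. orth (v j)) in
           exposes (v i) C (C \<inter> orth (v i)) \<and> (C \<inter> orth (v i)) face_of C \<and> b \<in> C \<inter> orth (v i))
      \<and> (let D = K \<inter> (\<Inter>j\<in>{1..<i}. orth (adjoint M (v j))) in
           exposes (adjoint M (v i)) D (D \<inter> orth (adjoint M (v i)))
           \<and> (D \<inter> orth (adjoint M (v i))) face_of D
           \<and> {X\<in>K. M X = b} \<subseteq> D \<inter> orth (adjoint M (v i)))"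
  proof (intro ballI, goal_cases)
    case (1 i)
    then have i: "i \<in> {1..r}" by simp
    have "b \<in> M ` K \<inter> (\<Inter>j\<in>insert i {1..<i}. orth (v j))" using i by (intro bsub) auto
    moreover have "{X\<in>K. M X = b} \<subseteq> K \<inter> (\<Inter>j\<in>insert i {1..<i}. orth (adjoint M (v j)))"
      using i by (intro Fsub) auto
    moreover have "(M ` K \<inter> (\<Inter>j\<in>{1..<i}. orth (v j)) \<inter> orth (v i)) face_of (M ` K \<inter> (\<Inter>j\<in>{1..<i}. orth (v j)))"
      using vdual i by (intro dual_face convex_orths MKc) auto
    moreover have "(K \<inter> (\<Inter>j\<in>{1..<i}. orth (adjoint M (v j))) \<inter> orth (adjoint M (v i))) face_of (K \<inter> (\<Inter>j\<in>{1..<i}. orth (adjoint M (v j))))"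
      using adual i by (intro dual_face convex_orths Kc) auto
    ultimately show ?case
      using vdual adual i
      unfolding Let_def exposes_def by auto
  qed
  have P2: "(M ` K \<inter> (\<Inter>j\<in>{1..r}. orth (v j))) face_of (M ` K)"
    by (rule chain_face[OF MKc]) (use vdual in auto)
  have P3: "(K \<inter> (\<Inter>j\<in>{1..r}. orth (adjoint M (v j)))) face_of K"
    by (rule chain_face[OF Kc]) (use adual in auto)
  let ?N = "M ` K \<inter> (\<Inter>j\<in>{1..r}. orth (v j))"
  have P4: "?N = face_hull {b} (M ` K)
        \<longleftrightarrow> K \<inter> (\<Inter>j\<in>{1..r}. orth (adjoint M (v j))) = face_hull {X\<in>K. M X = b} K"
    unfolding face_hull_gen[OF MK bK] hull_pre[OF linM coneK Fne] Deq
  proof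
    assume "?N = gen (M ` K) b" then show "{x \<in> K. M x \<in> ?N} = {x \<in> K. M x \<in> gen (M ` K) b}" by simp
  next
    assume h: "{x \<in> K. M x \<in> ?N} = {x \<in> K. M x \<in> gen (M ` K) b}"
    have "M ` {x \<in> K. M x \<in> ?N} = ?N" by auto
    moreover have "M ` {x \<in> K. M x \<in> gen (M ` K) b} = gen (M ` K) b" unfolding gen_def by auto
    ultimately show "?N = gen (M ` K) b" using h by metis
  qed
  show ?thesis using P1 P2 P3 P4 bsub[of "{1..r}"] Fsub[of "{1..r}"] by blast
qed

end
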